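(* Let $\lambda>0$, $M>0$, $\ell>0$, $m>0$, $g>0$, $k>0$, and set $\omega^2=g/\ell$, $A=-\omega^2(1+m/M)$, $B=2\lambda\left(\frac{1}{M\ell}+\frac{1}{m\ell}\right)$. Consider the linear system $\dot y=Q y$ on $\mathbb{R}^8$, $y=(\theta_1,v_1,\theta_2,v_2,x_1,w_1,x_2,w_2)^T$, given by \[ \begin{aligned} \dot\theta_1&=v_1, & \dot v_1&=A\theta_1+Bv_1+\tfrac{k}{M\ell}x_1+\tfrac{2\rho}{M\ell}w_1-\tfrac{k}{M\ell}x_2,\\ \dot\theta_2&=v_2, & \dot v_2&=A\theta_2+Bv_2-\tfrac{k}{M\ell}x_1+\tfrac{k}{M\ell}x_2+\tfrac{2\rho}{M\ell}w_2,\\ \dot x_1&=w_1, & \dot w_1&=\tfrac{mg}{M}\theta_1-\tfrac{2\lambda}{M}v_1-\tfrac{k}{M}x_1-\tfrac{2\rho}{M}w_1+\tfrac{k}{M}x_2,\\ \dot x_2&=w_2, & \dot w_2&=\tfrac{mg}{M}\theta_2-\tfrac{2\lambda}{M}v_2+\tfrac{k}{M}x_1-\tfrac{k}{M}x_2-\tfrac{2\rho}{M}w_2, \end{aligned} \] and the piecewise-defined system (S) described in the context. Then, for every sufficiently small $\rho>0$, both systems have the line of fixed points $\{\theta_1=v_1=\theta_2=v_2=w_1=w_2=0,\ x_1=x_2\}$, and this line of fixed points is Lyapunov unstable for both systems.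
   Context: System (S) (two identical coupled pendulum clocks, small-amplitude model): with $f(\theta;\lambda,\tilde\theta)=-2\lambda$ if $|\theta|<\tilde\theta$ and $=2\lambda$ if $|\theta|\ge\tilde\theta$ ($\tilde\theta>0$), unknowns $\theta_1,\theta_2,x_1,x_2$ of $t$, \[ \begin{aligned} &\ddot\theta_1+\Big(\tfrac{1}{m\ell}+\tfrac{1}{M\ell}\Big)f(\theta_1;\lambda,\tilde\theta)\dot\theta_1+\omega^2\Big(1+\tfrac{m}{M}\Big)\theta_1-\tfrac{2\rho}{M\ell}\dot x_1=-\tfrac{k}{M\ell}(x_2-x_1),\\ &\ddot\theta_2+\Big(\tfrac{1}{m\ell}+\tfrac{1}{M\ell}\Big)f(\theta_2;\lambda,\tilde\theta)\dot\theta_2+\omega^2\Big(1+\tfrac{m}{M}\Big)\theta_2-\tfrac{2\rho}{M\ell}\dot x_2=\tfrac{k}{M\ell}(x_2-x_1),\\ &\ddot x_1-\tfrac{1}{M}f(\theta_1;\lambda,\tilde\theta)\dot\theta_1-\tfrac{m}{M}g\theta_1+\tfrac{2\rho}{M}\dot x_1=\tfrac{k}{M}(x_2-x_1),\\ &\ddot x_2-\tfrac{1}{M}f(\theta_2;\lambda,\tilde\theta)\dot\theta_2-\tfrac{m}{M}g\theta_2+\tfrac{2\rho}{M}\dot x_2=-\tfrac{k}{M}(x_2-x_1), \end{aligned} \] regarded as a first-order system in $(\theta_1,\dot\theta_1,\theta_2,\dot\theta_2,x_1,\dot x_1,x_2,\dot x_2)$. In the region $|\theta_1|,|\theta_2|<\tilde\theta$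 it coincides with the linear system $\dot y=Qy$ of the claim. Here $\theta_i$ are pendulum angles, $x_i$ attachment-point positions, $m$ pendulum mass, $\ell$ pendulum length, $M$ attachment mass, $k$ coupling stiffness, $\rho$ coupling damping, $g$ gravity. *)

theory Defs
  imports "HOL-Analysis.Analysis"
begin

text \<open>State vector y = (theta1, v1, theta2, v2, x1, w1, x2, w2) in R^8,
  represented as a nested product of reals (Euclidean norm).\<close>

type_synonym state = "real \<times> real \<times> real \<times> real \<times> real \<times> real \<times> real \<times> real"

definition linQ ::
  "real \<Rightarrow> real \<Rightarrow> real \<Rightarrow> real \<Rightarrow> real \<Rightarrow> real \<Rightarrow> real \<Rightarrow> state \<Rightarrow> state" where
  "linQ lam M l m g k rho =
     (\<lambda>(th1, v1, th2, v2, x1, w1, x2, w2).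
        let A = - (g / l) * (1 + m / M);
            B = 2 * lam * (1 / (M * l) + 1 / (m * l))
        in ( v1,
             A * th1 + B * v1 + k / (M * l) * x1 + 2 * rho / (M * l) * w1 - k / (M * l) * x2,
             v2,
             A * th2 + B * v2 - k / (M * l) * x1 + k / (M * l) * x2 + 2 * rho / (M * l) * w2,
             w1,
             m * g / M * th1 - 2 * lam / M * v1 - k / M * x1 - 2 * rho / M * w1 + k / M * x2,
             w2,
             m * g / M * th2 - 2 * lam / M * v2 + k / M * x1 - k / M * x2 - 2 * rho / M * w2))"

definition fsw :: "real \<Rightarrow> real \<Rightarrow> real \<Rightarrow> real" where
  "fsw lam tht th = (if \<bar>th\<bar> < tht then - 2 * lam else 2 * lam)"

text \<open>System (S) written as a first-order system, solved for the highest derivatives.\<close>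

definition sysS ::
  "real \<Rightarrow> real \<Rightarrow> real \<Rightarrow> real \<Rightarrow> real \<Rightarrow> real \<Rightarrow> real \<Rightarrow> real \<Rightarrow> state \<Rightarrow> state" where
  "sysS lam tht M l m g k rho =
     (\<lambda>(th1, v1, th2, v2, x1, w1, x2, w2).
        ( v1,
          - (1 / (m * l) + 1 / (M * l)) * fsw lam tht th1 * v1 - (g / l) * (1 + m / M) * th1
            + 2 * rho / (M * l) * w1 - k / (M * l) * (x2 - x1),
          v2,
          - (1 / (m * l) + 1 / (M * l)) * fsw lam tht th2 * v2 - (g / l) * (1 + m / M) * th2
            + 2 * rho / (M * l) * w2 + k / (M * l) * (x2 - x1),
          w1,
          1 / M * fsw lam tht th1 * v1 + m / M * g * th1 - 2 * rho / M * w1 + k / M * (x2 - x1),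
          w2,
          1 / M * fsw lam tht th2 * v2 + m / M * g * th2 - 2 * rho / M * w2 - k / M * (x2 - x1)))"

definition fixed_line :: "state set" where
  "fixed_line = {(0, 0, 0, 0, x, 0, x, 0) | x. True}"

definition fixed_points :: "(state \<Rightarrow> state) \<Rightarrow> state set" where
  "fixed_points F = {y. F y = 0}"

definition is_solution :: "(state \<Rightarrow> state) \<Rightarrow> state \<Rightarrow> real \<Rightarrow> (real \<Rightarrow> state) \<Rightarrow> bool" where
  "is_solution F y0 T y \<longleftrightarrow> 0 \<le> T \<and> y 0 = y0 \<and>
     (\<forall>t\<in>{0..T}. (y has_vector_derivative F (y t)) (at t within {0..T}))"

definition lyapunov_stable_set :: "(state \<Rightarrow> state) \<Rightarrow> state set \<Rightarrow> bool" where
  "lyapunov_stable_set F S \<longleftrightarrow>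
     (\<forall>\<epsilon>>0. \<exists>\<delta>>0. \<forall>y0 T y. infdist y0 S < \<delta> \<and> is_solution F y0 T y \<longrightarrow>
        (\<forall>t\<in>{0..T}. infdist (y t) S < \<epsilon>))"

end

theory Submission
  imports Defs
begin

definition RR :: "real \<Rightarrow> real \<Rightarrow> complex \<Rightarrow> real \<Rightarrow> real" where
  "RR \<alpha> \<omega> z t = exp (\<alpha>*t) * (Re z * cos (\<omega>*t) - Im z * sin (\<omega>*t))"

lemma RR_deriv:
  "((\<lambda>t. C * RR \<alpha> \<omega> z t) has_vector_derivative (C * RR \<alpha> \<omega> (z * Complex \<alpha> \<omega>) t)) (at t within S)"
proof -
  have "((\<lambda>t. C * RR \<alpha> \<omega> z t) has_real_derivative (C * RR \<alpha> \<omega> (z * Complex \<alpha> \<omega>) t)) (at t within S)"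
    unfolding RR_def
    by (rule derivative_eq_intros refl | simp)+ (simp add: algebra_simps)
  then show ?thesis by (simp add: has_real_derivative_iff_has_vector_derivative)
qed

lemma RR_add: "RR \<alpha> \<omega> (x + y) t = RR \<alpha> \<omega> x t + RR \<alpha> \<omega> y t"
  by (simp add: RR_def algebra_simps)
lemma RR_diff: "RR \<alpha> \<omega> (x - y) t = RR \<alpha> \<omega> x t - RR \<alpha> \<omega> y t"
  by (simp add: RR_def algebra_simps)
lemma RR_scale: "RR \<alpha> \<omega> (of_real c * x) t = c * RR \<alpha> \<omega> x t"
  by (simp add: RR_def algebra_simps)
lemma RR_ofreal: "RR \<alpha> \<omega> (of_real c) t = c * RR \<alpha> \<omega> 1 t"
  by (simp add: RR_def algebra_simps)
lemma RR_0: "RR \<alpha> \<omega> z 0 = Re z"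
  by (simp add: RR_def)
lemma RR_1_bound: "\<bar>RR \<alpha> \<omega> 1 t\<bar> \<le> exp (\<alpha>*t)"
  by (simp add: RR_def abs_mult)

definition ysol :: "real \<Rightarrow> real \<Rightarrow> complex \<Rightarrow> complex \<Rightarrow> real \<Rightarrow> real \<Rightarrow> state" where
  "ysol \<alpha> \<omega> W V C t = (C * RR \<alpha> \<omega> 1 t, C * RR \<alpha> \<omega> (Complex \<alpha> \<omega>) t, C * RR \<alpha> \<omega> 1 t, C * RR \<alpha> \<omega> (Complex \<alpha> \<omega>) t,
      C * RR \<alpha> \<omega> V t, C * RR \<alpha> \<omega> W t, C * RR \<alpha> \<omega> V t, C * RR \<alpha> \<omega> W t)"

lemma ysol_deriv:
  fixes lam M l m g k rho \<alpha> \<omega> :: real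
  defines "\<mu> \<equiv> Complex \<alpha> \<omega>"
  assumes h1: "\<mu>*\<mu> = of_real (- (g / l) * (1 + m / M)) + of_real (2 * lam * (1 / (M * l) + 1 / (m * l))) * \<mu> + of_real (2 * rho / (M * l)) * W"
    and h2: "W * \<mu> = of_real (m * g / M) - of_real (2 * lam / M) * \<mu> - of_real (2 * rho / M) * W"
    and h3: "V * \<mu> = W"
  shows "(ysol \<alpha> \<omega> W V C has_vector_derivative linQ lam M l m g k rho (ysol \<alpha> \<omega> W V C t)) (at t within S)"
proof -
  have e1: "RR \<alpha> \<omega> (\<mu>*\<mu>) t = (- (g / l) * (1 + m / M)) * RR \<alpha> \<omega> 1 t + (2 * lam * (1 / (M * l) + 1 / (m * l))) * RR \<alpha> \<omega> \<mu> t + (2 * rho / (M * l)) * RR \<alpha> \<omega> W t"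
    unfolding h1 by (simp only: RR_add RR_scale RR_ofreal)
  have e2: "RR \<alpha> \<omega> (W*\<mu>) t = (m * g / M) * RR \<alpha> \<omega> 1 t - (2 * lam / M) * RR \<alpha> \<omega> \<mu> t - (2 * rho / M) * RR \<alpha> \<omega> W t"
    unfolding h2 by (simp only: RR_diff RR_scale RR_ofreal)
  have "(ysol \<alpha> \<omega> W V C has_vector_derivative
     (C * RR \<alpha> \<omega> (1*\<mu>) t, C * RR \<alpha> \<omega> (\<mu>*\<mu>) t, C * RR \<alpha> \<omega> (1*\<mu>) t, C * RR \<alpha> \<omega> (\<mu>*\<mu>) t,
      C * RR \<alpha> \<omega> (V*\<mu>) t, C * RR \<alpha> \<omega> (W*\<mu>) t, C * RR \<alpha> \<omega> (V*\<mu>) t, C * RR \<alpha> \<omega> (W*\<mu>) t)) (at t within S)"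
    unfolding ysol_def[abs_def] \<mu>_def
    by (intro has_vector_derivative_Pair RR_deriv)
  also have "(C * RR \<alpha> \<omega> (1*\<mu>) t, C * RR \<alpha> \<omega> (\<mu>*\<mu>) t, C * RR \<alpha> \<omega> (1*\<mu>) t, C * RR \<alpha> \<omega> (\<mu>*\<mu>) t,
      C * RR \<alpha> \<omega> (V*\<mu>) t, C * RR \<alpha> \<omega> (W*\<mu>) t, C * RR \<alpha> \<omega> (V*\<mu>) t, C * RR \<alpha> \<omega> (W*\<mu>) t)
     = linQ lam M l m g k rho (ysol \<alpha> \<omega> W V C t)"
    unfolding e1 e2 h3 by (simp add: linQ_def ysol_def \<mu>_def Let_def algebra_simps)
  finally show ?thesis .
qed

lemma core_fix:
  fixes M l m g k th d :: real
  assumes "M > 0" "l > 0" "m > 0" "g > 0" "k > 0"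
    and e1: "- (g / l) * (1 + m / M) * th + k / (M * l) * d = 0"
    and e2: "m * g / M * th - k / M * d = 0"
  shows "th = 0 \<and> d = 0"
proof -
  have f1: "- g * (M + m) * th + k * d = 0"
  proof -
    have "(M*l) * (- (g / l) * (1 + m / M) * th + k / (M * l) * d) = - g * (M + m) * th + k * d"
      using assms by (simp add: field_simps)
    then show ?thesis using e1 by (metis mult_zero_right)
  qed
  have f2: "m * g * th - k * d = 0"
  proof -
    have "M * (m * g / M * th - k / M * d) = m * g * th - k * d" using assms by (simp add: field_simps)
    then show ?thesis using e2 by (metis mult_zero_right)
  qed
  have "g * M * th = 0" using f1 f2 by (simp add: algebra_simps)
  then have "th = 0" using assms by simp
  then show ?thesis using f2 assms by simp
qed

lemma fixed_lin:
  fixes lam M l m g k rho :: real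
  assumes "M > 0" "l > 0" "m > 0" "g > 0" "k > 0"
  shows "fixed_points (linQ lam M l m g k rho) = fixed_line"
proof (rule set_eqI)
  fix y :: state
  obtain th1 v1 th2 v2 x1 w1 x2 w2 where y: "y = (th1, v1, th2, v2, x1, w1, x2, w2)" by (cases y) auto
  show "y \<in> fixed_points (linQ lam M l m g k rho) \<longleftrightarrow> y \<in> fixed_line"
  proof
    assume "y \<in> fixed_points (linQ lam M l m g k rho)"
    then have z: "v1 = 0" "v2 = 0" "w1 = 0" "w2 = 0"
      and a1: "- (g / l) * (1 + m / M) * th1 + k / (M * l) * x1 - k / (M * l) * x2 = 0"
      and a2: "- (g / l) * (1 + m / M) * th2 - k / (M * l) * x1 + k / (M * l) * x2 = 0"
      and a3: "m * g / M * th1 - k / M * x1 + k / M * x2 = 0"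
      and a4: "m * g / M * th2 + k / M * x1 - k / M * x2 = 0"
      by (auto simp: fixed_points_def linQ_def y Let_def zero_prod_def)
    have b1: "- (g / l) * (1 + m / M) * th1 + k / (M * l) * (x1 - x2) = 0"
      using a1 by (simp add: algebra_simps add_divide_distrib diff_divide_distrib)
    have b3: "m * g / M * th1 - k / M * (x1 - x2) = 0"
      using a3 by (simp add: algebra_simps add_divide_distrib diff_divide_distrib)
    have b2: "- (g / l) * (1 + m / M) * th2 + k / (M * l) * (x2 - x1) = 0"
      using a2 by (simp add: algebra_simps add_divide_distrib diff_divide_distrib)
    have b4: "m * g / M * th2 - k / M * (x2 - x1) = 0"
      using a4 by (simp add: algebra_simps add_divide_distrib diff_divide_distrib)
    have "th1 = 0 \<and> x1 - x2 = 0" by (rule core_fix[OF assms b1 b3])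
    moreover have "th2 = 0 \<and> x2 - x1 = 0" by (rule core_fix[OF assms b2 b4])
    ultimately show "y \<in> fixed_line" using z by (auto simp: fixed_line_def y)
  next
    assume "y \<in> fixed_line"
    then show "y \<in> fixed_points (linQ lam M l m g k rho)"
      by (auto simp: fixed_line_def fixed_points_def linQ_def Let_def zero_prod_def)
  qed
qed

lemma fixed_sys:
  fixes lam M l m g k rho tht :: real
  assumes "M > 0" "l > 0" "m > 0" "g > 0" "k > 0"
  shows "fixed_points (sysS lam tht M l m g k rho) = fixed_line"
proof (rule set_eqI)
  fix y :: state
  obtain th1 v1 th2 v2 x1 w1 x2 w2 where y: "y = (th1, v1, th2, v2, x1, w1, x2, w2)" by (cases y) auto
  show "y \<in> fixed_points (sysS lam tht M l m g k rho) \<longleftrightarrow> y \<in> fixed_line"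
  proof
    assume "y \<in> fixed_points (sysS lam tht M l m g k rho)"
    then have z: "v1 = 0" "v2 = 0" "w1 = 0" "w2 = 0"
      and a1: "- (g / l) * (1 + m / M) * th1 - k / (M * l) * (x2 - x1) = 0"
      and a2: "- (g / l) * (1 + m / M) * th2 + k / (M * l) * (x2 - x1) = 0"
      and a3: "m / M * g * th1 + k / M * (x2 - x1) = 0"
      and a4: "m / M * g * th2 - k / M * (x2 - x1) = 0"
      by (auto simp: fixed_points_def sysS_def y zero_prod_def)
    have b1: "- (g / l) * (1 + m / M) * th1 + k / (M * l) * (x1 - x2) = 0"
      using a1 by (simp add: algebra_simps add_divide_distrib diff_divide_distrib)
    have b3: "m * g / M * th1 - k / M * (x1 - x2) = 0"
      using a3 by (simp add: algebra_simps add_divide_distrib diff_divide_distrib)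
    have b2: "- (g / l) * (1 + m / M) * th2 + k / (M * l) * (x2 - x1) = 0"
      using a2 by (simp add: algebra_simps add_divide_distrib diff_divide_distrib)
    have b4: "m * g / M * th2 - k / M * (x2 - x1) = 0"
      using a4 by (simp add: algebra_simps add_divide_distrib diff_divide_distrib)
    have "th1 = 0 \<and> x1 - x2 = 0" by (rule core_fix[OF assms b1 b3])
    moreover have "th2 = 0 \<and> x2 - x1 = 0" by (rule core_fix[OF assms b2 b4])
    ultimately show "y \<in> fixed_line" using z by (auto simp: fixed_line_def y)
  next
    assume "y \<in> fixed_line"
    then show "y \<in> fixed_points (sysS lam tht M l m g k rho)"
      by (auto simp: fixed_line_def fixed_points_def sysS_def zero_prod_def)
  qed
qed

lemma sysS_eq_linQ:
  assumes "\<bar>th1\<bar> < tht" "\<bar>th2\<bar> < tht"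
  shows "sysS lam tht M l m g k rho (th1, v1, th2, v2, x1, w1, x2, w2) = linQ lam M l m g k rho (th1, v1, th2, v2, x1, w1, x2, w2)"
  using assms by (simp add: sysS_def linQ_def fsw_def Let_def algebra_simps add_divide_distrib diff_divide_distrib)

lemma norm8: "norm ((a1, a2, a3, a4, a5, a6, a7, a8) :: state) \<le> \<bar>a1\<bar> + \<bar>a2\<bar> + \<bar>a3\<bar> + \<bar>a4\<bar> + \<bar>a5\<bar> + \<bar>a6\<bar> + \<bar>a7\<bar> + \<bar>a8\<bar>"
proof -
  have "\<And>(x::real) (y::'a::real_normed_vector) b. norm y \<le> b \<Longrightarrow> norm (x, y) \<le> \<bar>x\<bar> + b"
    by (metis add_left_mono norm_Pair_le order_trans real_norm_def)
  note r = this
  have "norm a8 \<le> \<bar>a8\<bar>" by simp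
  from r[OF this] have "norm (a7, a8) \<le> \<bar>a7\<bar> + \<bar>a8\<bar>" .
  from r[OF this] have "norm (a6, a7, a8) \<le> \<bar>a6\<bar> + (\<bar>a7\<bar> + \<bar>a8\<bar>)" .
  from r[OF this] have "norm (a5, a6, a7, a8) \<le> \<bar>a5\<bar> + (\<bar>a6\<bar> + (\<bar>a7\<bar> + \<bar>a8\<bar>))" .
  from r[OF this] have "norm (a4, a5, a6, a7, a8) \<le> \<bar>a4\<bar> + (\<bar>a5\<bar> + (\<bar>a6\<bar> + (\<bar>a7\<bar> + \<bar>a8\<bar>)))" .
  from r[OF this] have "norm (a3, a4, a5, a6, a7, a8) \<le> \<bar>a3\<bar> + (\<bar>a4\<bar> + (\<bar>a5\<bar> + (\<bar>a6\<bar> + (\<bar>a7\<bar> + \<bar>a8\<bar>))))" .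
  from r[OF this] have "norm (a2, a3, a4, a5, a6, a7, a8) \<le> \<bar>a2\<bar> + (\<bar>a3\<bar> + (\<bar>a4\<bar> + (\<bar>a5\<bar> + (\<bar>a6\<bar> + (\<bar>a7\<bar> + \<bar>a8\<bar>)))))" .
  from r[OF this] show ?thesis by (simp add: add.assoc)
qed

lemma infdist_geI:
  assumes "A \<noteq> {}" "\<And>p. p \<in> A \<Longrightarrow> d \<le> dist x p"
  shows "d \<le> infdist x A"
  using assms by (simp add: infdist_notempty cINF_greatest)

lemma unstable_generic:
  fixes F :: "state \<Rightarrow> state" and \<alpha> \<omega> h :: real and W V :: complex
  assumes alpha: "\<alpha> > 0" and h: "h > 0"
    and der: "\<And>C t T. 0 \<le> C \<Longrightarrow> 0 \<le> t \<Longrightarrow> t \<le> T \<Longrightarrow> C * exp (\<alpha> * T) \<le> h \<Longrightarrow>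
       (ysol \<alpha> \<omega> W V C has_vector_derivative F (ysol \<alpha> \<omega> W V C t)) (at t within {0..T})"
  shows "\<not> lyapunov_stable_set F fixed_line"
proof
  assume st: "lyapunov_stable_set F fixed_line"
  have "\<exists>\<delta>>0. \<forall>y0 T y. infdist y0 fixed_line < \<delta> \<and> is_solution F y0 T y \<longrightarrow>
        (\<forall>t\<in>{0..T}. infdist (y t) fixed_line < h)"
    using st h unfolding lyapunov_stable_set_def by simp
  then obtain \<delta> where \<delta>: "\<delta> > 0" and P0: "\<forall>y0 T y. infdist y0 fixed_line < \<delta> \<and> is_solution F y0 T y \<longrightarrow>
        (\<forall>t\<in>{0..T}. infdist (y t) fixed_line < h)" by (elim exE conjE)
  have P: "\<forall>t\<in>{0..T}. infdist (y t) fixed_line < h"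
    if "infdist y0 fixed_line < \<delta>" "is_solution F y0 T y" for y0 T y
  proof -
    have "infdist y0 fixed_line < \<delta> \<and> is_solution F y0 T y \<longrightarrow> (\<forall>t\<in>{0..T}. infdist (y t) fixed_line < h)"
      by (rule spec[OF spec[OF spec[OF P0, of y0], of T], of y])
    then show ?thesis using that by blast
  qed
  define \<tau> where "\<tau> = (if \<omega> = 0 then 1 else 2 * pi / \<bar>\<omega>\<bar>)"
  have tau: "\<tau> > 0" unfolding \<tau>_def by simp
  define K0 where "K0 = 2 + 2 * \<bar>\<alpha>\<bar> + 2 * \<bar>Re W\<bar>"
  have K0: "K0 > 0" unfolding K0_def by simp
  define n where "n = nat \<lceil>h * K0 / (\<delta> * \<alpha> * \<tau>)\<rceil>"
  define T where "T = real n * \<tau>"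
  define C where "C = h / exp (\<alpha> * T)"
  have T0: "T \<ge> 0" unfolding T_def using tau by simp
  have C0: "C > 0" unfolding C_def using h by simp
  have CT: "C * exp (\<alpha> * T) = h" unfolding C_def by simp
  have nbig: "real n \<ge> h * K0 / (\<delta> * \<alpha> * \<tau>)" unfolding n_def by linarith
  have "\<alpha> * T \<ge> h * K0 / \<delta>"
  proof -
    have "\<alpha> * T = real n * (\<alpha> * \<tau>)" unfolding T_def by simp
    also have "\<dots> \<ge> h * K0 / (\<delta> * \<alpha> * \<tau>) * (\<alpha> * \<tau>)"
      using nbig alpha tau by (intro mult_right_mono) auto
    also have "h * K0 / (\<delta> * \<alpha> * \<tau>) * (\<alpha> * \<tau>) = h * K0 / \<delta>" using alpha tau by simp
    finally show ?thesis .
  qed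
  then have "exp (\<alpha> * T) > h * K0 / \<delta>"
    using exp_ge_add_one_self[of "\<alpha> * T"] by linarith
  then have "h * K0 < \<delta> * exp (\<alpha> * T)" using \<delta> by (simp add: field_simps)
  then have CK: "C * K0 < \<delta>" unfolding C_def by (simp add: field_simps)
  define y where "y = ysol \<alpha> \<omega> W V C"
  have sol: "is_solution F (y 0) T y"
    unfolding is_solution_def
  proof (intro conjI ballI)
    fix t assume "t \<in> {0..T}"
    then show "(y has_vector_derivative F (y t)) (at t within {0..T})"
      unfolding y_def using der[of C t T] C0 CT by simp
  qed (use T0 in auto)
  have "infdist (y 0) fixed_line < \<delta>"
  proof -
    define p :: state where "p = (0, 0, 0, 0, C * Re V, 0, C * Re V, 0)"
    have pL: "p \<in> fixed_line" unfolding p_def fixed_line_def by auto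
    have "infdist (y 0) fixed_line \<le> dist (y 0) p" by (rule infdist_le[OF pL])
    also have "dist (y 0) p = norm ((C, C * \<alpha>, C, C * \<alpha>, 0, C * Re W, 0, C * Re W) :: state)"
      unfolding dist_norm y_def ysol_def p_def by (simp add: RR_0)
    also have "\<dots> \<le> C * K0" using norm8[of C "C * \<alpha>" C "C * \<alpha>" 0 "C * Re W" 0 "C * Re W"] C0
      unfolding K0_def by (simp add: abs_mult algebra_simps)
    finally show ?thesis using CK by simp
  qed
  from P[OF this sol] T0 have "infdist (y T) fixed_line < h" by auto
  moreover have "h \<le> infdist (y T) fixed_line"
  proof (rule infdist_geI)
    show "fixed_line \<noteq> {}" unfolding fixed_line_def by auto
    have cosT: "cos (\<omega> * T) = 1"
    proof (cases "\<omega> = 0")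
      case False
      have "cos (\<omega> * T) = cos \<bar>\<omega> * T\<bar>" by simp
      also have "\<bar>\<omega> * T\<bar> = (2 * pi) * of_int (int n)"
        using False T0 unfolding T_def \<tau>_def by (simp add: abs_mult)
      finally show ?thesis using cos_int_2pin[of "int n"] by simp
    qed simp
    have yT: "fst (y T) = h" unfolding y_def ysol_def RR_def using cosT CT by simp
    fix p assume "p \<in> fixed_line"
    then have "fst p = 0" unfolding fixed_line_def by auto
    then have "dist (fst (y T)) (fst p) = h" using yT h by simp
    then show "h \<le> dist (y T) p" using dist_fst_le[of "y T" p] by simp
  qed
  ultimately show False by simp
qed

lemma eigen_exists:
  fixes a B e p q r :: real
  assumes "e>0" "p>0" "q>0" "r>0" "r<B" "r*a - e*p > 0"
  shows "\<exists>\<mu>::complex. Re \<mu> > 0 \<and>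
    (\<mu> + of_real r) * (\<mu>*\<mu> - of_real B * \<mu> + of_real a) = of_real e * (of_real p - of_real q * \<mu>)"
proof -
  define f where "f = (\<lambda>s::real. (s + r) * (s * s - B * s + a) - e * (p - q * s))"
  have f1: "f (-r) \<le> 0" using assms unfolding f_def by (simp add: mult_pos_pos add_pos_pos)
  have f2: "0 \<le> f 0" using assms unfolding f_def by simp
  have "continuous_on {-r..0} f" unfolding f_def by (intro continuous_intros)
  from IVT'[of f "-r" 0 0, OF f1 f2 _ this] assms obtain s0 where s0: "-r \<le> s0" "s0 \<le> 0" "f s0 = 0" by auto
  define b where "b = r - B + s0"
  define c where "c = a - r*B + e*q + s0*b"
  define D where "D = b*b - 4*c"
  have bneg: "b < 0" using s0 assms unfolding b_def by simp
  obtain \<mu> :: complex where mu: "Re \<mu> > 0" "\<mu>*\<mu> + of_real b * \<mu> + of_real c = 0"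
  proof (cases "D \<ge> 0")
    case True
    define x where "x = (-b + sqrt D)/2"
    have "x > 0"
    proof -
      have "0 \<le> sqrt D" using True by simp
      then have "-b + sqrt D > 0" using bneg by linarith
      then show ?thesis unfolding x_def by simp
    qed
    moreover have "x*x + b*x + c = 0" using True unfolding x_def D_def
      by (simp add: field_simps power2_eq_square[symmetric]) (simp add: algebra_simps power2_eq_square)
    ultimately show ?thesis
      by (intro that[of "of_real x"]) (simp_all, metis of_real_add of_real_mult of_real_eq_0_iff)
  next
    case False
    define z where "z = Complex (-b/2) (sqrt (-D)/2)"
    have sq: "sqrt (-D) * sqrt (-D) = -D" using False by simp
    have "z*z + of_real b * z + of_real c = 0"
      unfolding complex_eq_iff using sq unfolding z_def D_def by (simp add: algebra_simps) (simp add: field_simps)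
    then show ?thesis using bneg by (intro that[of z]) (simp_all add: z_def)
  qed
  have "(\<mu> + of_real r) * (\<mu>*\<mu> - of_real B * \<mu> + of_real a) - of_real e * (of_real p - of_real q * \<mu>)
      = (\<mu> - of_real s0) * (\<mu>*\<mu> + of_real b * \<mu> + of_real c) + of_real (f s0)"
    unfolding f_def b_def c_def by (simp add: algebra_simps)
  then show ?thesis using mu s0 by (intro exI[of _ \<mu>]) simp
qed


theorem proposition2:
  fixes lam M l m g k tht :: real
  assumes "lam > 0" "M > 0" "l > 0" "m > 0" "g > 0" "k > 0" "tht > 0"
  shows "\<exists>rho0>0. \<forall>rho. 0 < rho \<and> rho < rho0 \<longrightarrow>
           fixed_points (linQ lam M l m g k rho) = fixed_line \<and>
           fixed_points (sysS lam tht M l m g k rho) = fixed_line \<and>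
           \<not> lyapunov_stable_set (linQ lam M l m g k rho) fixed_line \<and>
           \<not> lyapunov_stable_set (sysS lam tht M l m g k rho) fixed_line"
proof -
  note pos = assms
  define a where "a = (g / l) * (1 + m / M)"
  define Bc where "Bc = 2 * lam * (1 / (M * l) + 1 / (m * l))"
  have Bc0: "Bc > 0" unfolding Bc_def using pos by (simp add: add_pos_pos)
  show ?thesis
  proof (intro exI[of _ "Bc * M / 2"] conjI allI impI)
    show "Bc * M / 2 > 0" using Bc0 pos by simp
    fix rho assume rho: "0 < rho \<and> rho < Bc * M / 2"
    show "fixed_points (linQ lam M l m g k rho) = fixed_line" using pos by (intro fixed_lin) auto
    show "fixed_points (sysS lam tht M l m g k rho) = fixed_line" using pos by (intro fixed_sys) auto
    define e where "e = 2 * rho / (M * l)"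
    define p where "p = m * g / M"
    define q where "q = 2 * lam / M"
    define r where "r = 2 * rho / M"
    have e0: "e > 0" and p0: "p > 0" and q0: "q > 0" and r0: "r > 0"
      unfolding e_def p_def q_def r_def using pos rho by auto
    have rB: "r < Bc" unfolding r_def using rho pos by (simp add: field_simps)
    have "r * a - e * p = 2 * rho * g / (l * M)"
      unfolding r_def a_def e_def p_def using pos by (simp add: field_simps)
    then have ra: "r * a - e * p > 0" using pos rho by simp
    obtain \<mu> where mu: "Re \<mu> > 0"
      and eig: "(\<mu> + of_real r) * (\<mu>*\<mu> - of_real Bc * \<mu> + of_real a) = of_real e * (of_real p - of_real q * \<mu>)"
      using eigen_exists[OF e0 p0 q0 r0 rB ra] by blast
    define \<alpha> where "\<alpha> = Re \<mu>"
    define \<omega> where "\<omega> = Im \<mu>"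
    have mueq: "\<mu> = Complex \<alpha> \<omega>" unfolding \<alpha>_def \<omega>_def by simp
    have alpha: "\<alpha> > 0" using mu unfolding \<alpha>_def .
    have mu0: "\<mu> \<noteq> 0" using mu by auto
    have ce0: "(of_real e :: complex) \<noteq> 0" using e0 by simp
    define W where "W = (\<mu>*\<mu> - of_real Bc * \<mu> + of_real a) / of_real e"
    define V where "V = W / \<mu>"
    have eW: "of_real e * W = \<mu>*\<mu> - of_real Bc * \<mu> + of_real a" unfolding W_def using ce0 by simp
    have h1: "\<mu>*\<mu> = of_real (- (g / l) * (1 + m / M)) + of_real (2 * lam * (1 / (M * l) + 1 / (m * l))) * \<mu> + of_real (2 * rho / (M * l)) * W"
    proof -
      have "of_real (- (g / l) * (1 + m / M)) = (- of_real a :: complex)" unfolding a_def by simp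
      moreover have "of_real (2 * lam * (1 / (M * l) + 1 / (m * l))) = (of_real Bc :: complex)" unfolding Bc_def ..
      moreover have "of_real (2 * rho / (M * l)) * W = of_real e * W" unfolding e_def ..
      ultimately show ?thesis using eW by simp
    qed
    have h2: "W * \<mu> = of_real (m * g / M) - of_real (2 * lam / M) * \<mu> - of_real (2 * rho / M) * W"
    proof -
      have "of_real e * (W * (\<mu> + of_real r)) = (of_real e * W) * (\<mu> + of_real r)"
        by (simp add: algebra_simps)
      also have "\<dots> = (\<mu> + of_real r) * (\<mu>*\<mu> - of_real Bc * \<mu> + of_real a)"
        unfolding eW by (simp add: algebra_simps)
      also have "\<dots> = of_real e * (of_real p - of_real q * \<mu>)" by (rule eig)
      finally have "of_real e * (W * (\<mu> + of_real r)) = of_real e * (of_real p - of_real q * \<mu>)" .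
      then have "W * (\<mu> + of_real r) = of_real p - of_real q * \<mu>" using ce0 by simp
      then show ?thesis unfolding p_def q_def r_def by (simp add: algebra_simps)
    qed
    have h3: "V * \<mu> = W" unfolding V_def using mu0 by simp
    note der = ysol_deriv[of \<alpha> \<omega> g l m M lam rho W V, folded mueq, OF h1 h2 h3]
    show "\<not> lyapunov_stable_set (linQ lam M l m g k rho) fixed_line"
      by (rule unstable_generic[OF alpha, of "tht / 2"]) (use pos der in auto)
    show "\<not> lyapunov_stable_set (sysS lam tht M l m g k rho) fixed_line"
    proof (rule unstable_generic[OF alpha, of "tht / 2"])
      show "tht / 2 > 0" using pos by simp
      fix C t T :: real
      assume C: "0 \<le> C" and t: "0 \<le> t" "t \<le> T" and CT: "C * exp (\<alpha> * T) \<le> tht / 2"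
      have "\<bar>C * RR \<alpha> \<omega> 1 t\<bar> \<le> C * exp (\<alpha> * t)"
        using RR_1_bound[of \<alpha> \<omega> t] C by (simp add: abs_mult mult_left_mono)
      also have "\<dots> \<le> C * exp (\<alpha> * T)" using C t alpha by (intro mult_left_mono) auto
      finally have th: "\<bar>C * RR \<alpha> \<omega> 1 t\<bar> < tht" using CT pos by simp
      have "sysS lam tht M l m g k rho (ysol \<alpha> \<omega> W V C t) = linQ lam M l m g k rho (ysol \<alpha> \<omega> W V C t)"
        unfolding ysol_def by (rule sysS_eq_linQ[OF th th])
      then show "(ysol \<alpha> \<omega> W V C has_vector_derivative sysS lam tht M l m g k rho (ysol \<alpha> \<omega> W V C t)) (at t within {0..T})"
        using der by simp
    qed
  qed
qed

end
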